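(* Let $(\mathfrak g,[\cdot,\cdot]_{\mathfrak g},E,S)$ be a quadratic ENL algebra and $K:\mathfrak g^*\to\mathfrak g$ a linear map. Then $K$ is an ENE-relative Rota–Baxter operator on $(\mathfrak g,[\cdot,\cdot]_{\mathfrak g},E)$ with respect to the coadjoint ENE-representation $(\mathfrak g^*;E^*,\mathrm{ad}^* )$ if and only if $B:=K\circ S^\sharp:\mathfrak g\to\mathfrak g$ is a Rota–Baxter operator of weight $0$ on the ENL algebra $(\mathfrak g,[\cdot,\cdot]_{\mathfrak g},E)$, i.e. $[Bx,By]_{\mathfrak g}=B([Bx,y]_{\mathfrak g}+[x,By]_{\mathfrak g})$ for all $x,y$ and $E\circ B=B\circ E$.
   Context: Vector spaces are finite-dimensional over an algebraically closed field of characteristic zero. An ENL algebra is a Lie algebra with linear $E$ satisfying $E[x,y]=[x,Ey]$ for all $x,y$. A quadratic ENL algebra $(\mathfrak g,E,S)$ is an ENL algebra with nondegenerate symmetric bilinear form $S$ such that $S([x,y],z)+S(y,[x,z])=0$ and $S(Ex,y)=S(x,Ey)$; $S^\sharp:\mathfrak g\to\mathfrak g^*$ is $\langle S^\sharp x,y\rangle=S(x,y)$. Coadjoint: $\langle\mathrm{ad}^*_x\xi,y\rangle=-\langle\xi,[x,y]\rangle$, $E^*$ the dual map. An ENE-relative Rota–Baxter operator with respect to $(\mathfrak g^*;E^*,\mathrm{ad}^* )$ is a linear $K:\mathfrak g^*\to\mathfrak g$ with $[K\xi,K\eta]_{\mathfrak g}=K(\mathrm{ad}^*_{K\xi}\eta-\mathrm{ad}^*_{K\eta}\xi)$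 for all $\xi,\eta$ and $E\circ K=K\circ E^*$. *)

theory Defs
  imports "HOL-Computational_Algebra.Polynomial"
begin

definition alg_closed_field :: "'k::field itself \<Rightarrow> bool" where
  "alg_closed_field _ \<longleftrightarrow> (\<forall>p :: 'k poly. 0 < degree p \<longrightarrow> (\<exists>x. poly p x = 0))"

definition fd_vector_space :: "('k::field \<Rightarrow> 'v::ab_group_add \<Rightarrow> 'v) \<Rightarrow> bool" where
  "fd_vector_space sc \<longleftrightarrow> vector_space sc \<and> (\<exists>B. finite B \<and> module.span sc B = UNIV)"

definition is_dual :: "('k::field \<Rightarrow> 'v::ab_group_add \<Rightarrow> 'v) \<Rightarrow> ('v \<Rightarrow> 'k) \<Rightarrow> bool" where
  "is_dual sc \<xi> \<longleftrightarrow> Vector_Spaces.linear sc ((*)) \<xi>"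

definition dual_linear :: "('k::field \<Rightarrow> 'v::ab_group_add \<Rightarrow> 'v) \<Rightarrow> (('v \<Rightarrow> 'k) \<Rightarrow> 'v) \<Rightarrow> bool" where
  "dual_linear sc K \<longleftrightarrow>
     (\<forall>\<xi> \<eta>. is_dual sc \<xi> \<longrightarrow> is_dual sc \<eta> \<longrightarrow> K (\<lambda>x. \<xi> x + \<eta> x) = K \<xi> + K \<eta>) \<and>
     (\<forall>\<xi> c. is_dual sc \<xi> \<longrightarrow> K (\<lambda>x. c * \<xi> x) = sc c (K \<xi>))"

definition bilinear_map :: "('k::field \<Rightarrow> 'v::ab_group_add \<Rightarrow> 'v) \<Rightarrow> ('k \<Rightarrow> 'w::ab_group_add \<Rightarrow> 'w) \<Rightarrow> ('v \<Rightarrow> 'v \<Rightarrow> 'w) \<Rightarrow> bool" where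
  "bilinear_map sc sw f \<longleftrightarrow> (\<forall>x. Vector_Spaces.linear sc sw (f x)) \<and> (\<forall>y. Vector_Spaces.linear sc sw (\<lambda>x. f x y))"

definition lie_algebra :: "('k::field \<Rightarrow> 'v::ab_group_add \<Rightarrow> 'v) \<Rightarrow> ('v \<Rightarrow> 'v \<Rightarrow> 'v) \<Rightarrow> bool" where
  "lie_algebra sc br \<longleftrightarrow> bilinear_map sc sc br \<and> (\<forall>x. br x x = 0) \<and>
     (\<forall>x y z. br x (br y z) + br y (br z x) + br z (br x y) = 0)"

definition ENL_algebra :: "('k::field \<Rightarrow> 'v::ab_group_add \<Rightarrow> 'v) \<Rightarrow> ('v \<Rightarrow> 'v \<Rightarrow> 'v) \<Rightarrow> ('v \<Rightarrow> 'v) \<Rightarrow> bool" where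
  "ENL_algebra sc br E \<longleftrightarrow> lie_algebra sc br \<and> Vector_Spaces.linear sc sc E \<and>
     (\<forall>x y. E (br x y) = br x (E y))"

definition quadratic_ENL :: "('k::field \<Rightarrow> 'v::ab_group_add \<Rightarrow> 'v) \<Rightarrow> ('v \<Rightarrow> 'v \<Rightarrow> 'v) \<Rightarrow> ('v \<Rightarrow> 'v) \<Rightarrow> ('v \<Rightarrow> 'v \<Rightarrow> 'k) \<Rightarrow> bool" where
  "quadratic_ENL sc br E S \<longleftrightarrow> ENL_algebra sc br E \<and> bilinear_map sc ((*)) S \<and>
     (\<forall>x y. S x y = S y x) \<and> (\<forall>x. (\<forall>y. S x y = 0) \<longrightarrow> x = 0) \<and>
     (\<forall>x y z. S (br x y) z + S y (br x z) = 0) \<and> (\<forall>x y. S (E x) y = S x (E y))"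

definition S_sharp :: "('v \<Rightarrow> 'v \<Rightarrow> 'k) \<Rightarrow> 'v \<Rightarrow> ('v \<Rightarrow> 'k)" where
  "S_sharp S x = (\<lambda>y. S x y)"

definition coad :: "('v \<Rightarrow> 'v \<Rightarrow> 'v) \<Rightarrow> 'v \<Rightarrow> ('v \<Rightarrow> 'k::ab_group_add) \<Rightarrow> ('v \<Rightarrow> 'k)" where
  "coad br x \<xi> = (\<lambda>y. - \<xi> (br x y))"

definition dual_map :: "('v \<Rightarrow> 'v) \<Rightarrow> ('v \<Rightarrow> 'k) \<Rightarrow> ('v \<Rightarrow> 'k)" where
  "dual_map E \<xi> = (\<lambda>y. \<xi> (E y))"

definition ENE_relative_RB_coad ::
  "('k::field \<Rightarrow> 'v::ab_group_add \<Rightarrow> 'v) \<Rightarrow> ('v \<Rightarrow> 'v \<Rightarrow> 'v) \<Rightarrow> ('v \<Rightarrow> 'v) \<Rightarrow> (('v \<Rightarrow> 'k) \<Rightarrow> 'v) \<Rightarrow> bool" where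
  "ENE_relative_RB_coad sc br E K \<longleftrightarrow> dual_linear sc K \<and>
     (\<forall>\<xi> \<eta>. is_dual sc \<xi> \<longrightarrow> is_dual sc \<eta> \<longrightarrow>
        br (K \<xi>) (K \<eta>) = K (\<lambda>y. coad br (K \<xi>) \<eta> y - coad br (K \<eta>) \<xi> y)) \<and>
     (\<forall>\<xi>. is_dual sc \<xi> \<longrightarrow> E (K \<xi>) = K (dual_map E \<xi>))"

definition RB_weight0_ENL ::
  "('k::field \<Rightarrow> 'v::ab_group_add \<Rightarrow> 'v) \<Rightarrow> ('v \<Rightarrow> 'v \<Rightarrow> 'v) \<Rightarrow> ('v \<Rightarrow> 'v) \<Rightarrow> ('v \<Rightarrow> 'v) \<Rightarrow> bool" where
  "RB_weight0_ENL sc br E B \<longleftrightarrow> Vector_Spaces.linear sc sc B \<and>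
     (\<forall>x y. br (B x) (B y) = B (br (B x) y + br x (B y))) \<and> E \<circ> B = B \<circ> E"

end

theory Submission
  imports Defs
begin

lemma lin_add: "Vector_Spaces.linear s1 s2 f \<Longrightarrow> f (x + y) = f x + f y"
  unfolding Vector_Spaces.linear_iff by simp
lemma lin_scale: "Vector_Spaces.linear s1 s2 f \<Longrightarrow> f (s1 c x) = s2 c (f x)"
  unfolding Vector_Spaces.linear_iff by simp
lemma lin_diff: assumes "Vector_Spaces.linear s1 s2 f" shows "f (x - y) = f x - f y"
proof -
  have "f x = f (x - y + y)" by simp
  also have "\<dots> = f (x - y) + f y" by (rule lin_add[OF assms])
  finally show ?thesis by (simp add: algebra_simps)
qed

lemma dual_surj:
  fixes sc :: "'k::field \<Rightarrow> 'v::ab_group_add \<Rightarrow> 'v" and S :: "'v \<Rightarrow> 'v \<Rightarrow> 'k"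
  assumes vs: "vector_space sc" and fin: "finite A" and sp: "module.span sc A = UNIV"
  and bil: "bilinear_map sc (*) S" and nd: "\<forall>x. (\<forall>y. S x y = 0) \<longrightarrow> x = 0"
  and xi: "Vector_Spaces.linear sc (*) \<xi>"
  shows "\<exists>x. \<forall>y. S x y = \<xi> y"
proof -
  interpret V: vector_space sc by fact
  obtain B where B: "B \<subseteq> A" "V.independent B" "A \<subseteq> V.span B"
    using V.maximal_independent_subset[of A] by blast
  have finB: "finite B" using B(1) fin finite_subset by blast
  have spB: "V.span B = UNIV"
  proof -
    have "V.span A \<subseteq> V.span (V.span B)" by (rule V.span_mono[OF B(3)])
    then have "UNIV \<subseteq> V.span B" by (simp only: sp V.span_span)
    then show ?thesis by blast
  qed
  interpret F: finite_dimensional_vector_space sc B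
    by (intro finite_dimensional_vector_space.intro vs finite_dimensional_vector_space_axioms.intro finB B(2) spB)
  have L1: "Vector_Spaces.linear sc (*) (S x)" for x using bil by (simp add: bilinear_map_def)
  have L2: "Vector_Spaces.linear sc (*) (\<lambda>x. S x y)" for y using bil by (simp add: bilinear_map_def)
  have vk: "vector_space ((*) :: 'k \<Rightarrow> 'k \<Rightarrow> 'k)" using xi unfolding Vector_Spaces.linear_iff by blast
  interpret P: vector_space_pair sc "(*) :: 'k \<Rightarrow> 'k \<Rightarrow> 'k" by unfold_locales (auto simp: algebra_simps)
  have eqspan: "f y = g y" if "Vector_Spaces.linear sc (*) f" "Vector_Spaces.linear sc (*) g"
     "\<forall>b\<in>B. f b = g b" for f g y
    using P.linear_eq_on_span[OF that(1,2), of B y] that(3) spB by auto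
  have indep0: "\<forall>b\<in>B. u b = 0" if "(\<Sum>b\<in>B. sc (u b) b) = 0" for u
    using V.dependent_finite[OF finB] B(2) that by blast
  define T where "T x = (\<Sum>b\<in>B. sc (S x b) b)" for x
  have Tlin: "Vector_Spaces.linear sc sc T"
    unfolding Vector_Spaces.linear_iff T_def
    by (auto simp: vs lin_add[OF L2] lin_scale[OF L2] V.scale_left_distrib sum.distrib
        V.scale_sum_right V.scale_scale)
  have Tdiff: "T x - T y = T (x - y)" for x y
    by (simp add: lin_diff[OF Tlin])
  have "inj T"
  proof (rule injI)
    fix x y assume "T x = T y"
    then have "T (x - y) = 0" using Tdiff by (metis diff_self)
    then have "\<forall>b\<in>B. S (x - y) b = 0" unfolding T_def using indep0 by blast
    then have "\<forall>z. S (x - y) z = 0"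
      using eqspan[OF L1, of "\<lambda>_. 0" "x - y"] P.linear_zero by auto
    then show "x = y" using nd by auto
  qed
  then have "surj T" using F.linear_inj_imp_surj Tlin by blast
  then obtain x where x: "T x = (\<Sum>b\<in>B. sc (\<xi> b) b)" by (metis surj_def)
  have "(\<Sum>b\<in>B. sc (S x b - \<xi> b) b) = 0"
    using x unfolding T_def by (simp add: V.scale_left_diff_distrib sum_subtractf)
  then have "\<forall>b\<in>B. S x b = \<xi> b" using indep0[of "\<lambda>b. S x b - \<xi> b"] by auto
  then have "\<forall>y. S x y = \<xi> y" using eqspan[OF L1 xi] by blast
  then show ?thesis by blast
qed

theorem proposition6p7:
  fixes sc :: "'k::field_char_0 \<Rightarrow> 'v::ab_group_add \<Rightarrow> 'v"
    and br :: "'v \<Rightarrow> 'v \<Rightarrow> 'v" and E :: "'v \<Rightarrow> 'v" and S :: "'v \<Rightarrow> 'v \<Rightarrow> 'k"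
    and K :: "('v \<Rightarrow> 'k) \<Rightarrow> 'v"
  assumes "alg_closed_field TYPE('k)"
    and "fd_vector_space sc"
    and "quadratic_ENL sc br E S"
    and "dual_linear sc K"
  shows "ENE_relative_RB_coad sc br E K \<longleftrightarrow> RB_weight0_ENL sc br E (K \<circ> S_sharp S)"
proof -
  from assms(2) have vs: "vector_space sc" and "\<exists>A. finite A \<and> module.span sc A = UNIV"
    by (auto simp: fd_vector_space_def)
  then obtain A where fin: "finite A" and sp: "module.span sc A = UNIV" by blast
  from assms(3) have bil: "bilinear_map sc (*) S" and sym: "\<And>x y. S x y = S y x"
    and nd: "\<forall>x. (\<forall>y. S x y = 0) \<longrightarrow> x = 0"
    and inv: "\<And>x y z. S (br x y) z + S y (br x z) = 0"
    and Es: "\<And>x y. S (E x) y = S x (E y)"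
    and enl: "ENL_algebra sc br E"
    by (auto simp: quadratic_ENL_def)
  from enl have lie: "lie_algebra sc br" by (simp add: ENL_algebra_def)
  then have brbil: "bilinear_map sc sc br" and alt: "\<And>x. br x x = 0"
    by (auto simp: lie_algebra_def)
  have BL1: "Vector_Spaces.linear sc sc (br x)" for x using brbil by (simp add: bilinear_map_def)
  have BL2: "Vector_Spaces.linear sc sc (\<lambda>x. br x y)" for y using brbil by (simp add: bilinear_map_def)
  have anti: "br y x = - br x y" for x y
  proof -
    have "0 = br (x + y) (x + y)" using alt by simp
    also have "\<dots> = br x x + br x y + (br y x + br y y)"
      using lin_add[OF BL1] lin_add[OF BL2] by (simp add: add.assoc)
    finally show ?thesis using alt by (simp add: eq_neg_iff_add_eq_0 add.commute)
  qed
  have L1: "Vector_Spaces.linear sc (*) (S x)" for x using bil by (simp add: bilinear_map_def)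
  have L2: "Vector_Spaces.linear sc (*) (\<lambda>x. S x y)" for y using bil by (simp add: bilinear_map_def)
  have Sneg: "S (- x) z = - S x z" for x z
    using lin_diff[OF L2, of 0 x] lin_diff[OF L2, of 0 0] by simp
  have dS: "is_dual sc (S_sharp S x)" for x using L1 by (simp add: is_dual_def S_sharp_def)
  have srj: "\<exists>x. \<xi> = S_sharp S x" if xid: "is_dual sc \<xi>" for \<xi>
  proof -
    obtain x where "\<forall>y. S x y = \<xi> y"
      using dual_surj[OF vs fin sp bil nd, of \<xi>] xid unfolding is_dual_def by blast
    then have "\<xi> = S_sharp S x" by (simp add: S_sharp_def fun_eq_iff)
    then show ?thesis by blast
  qed
  have Kd: "dual_linear sc K" by fact
  have Badd: "K (S_sharp S (x + y)) = K (S_sharp S x) + K (S_sharp S y)" for x y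
  proof -
    have "S_sharp S (x + y) = (\<lambda>z. S_sharp S x z + S_sharp S y z)"
      by (auto simp: S_sharp_def lin_add[OF L2])
    then show ?thesis using Kd dS by (simp add: dual_linear_def)
  qed
  have Bsc: "K (S_sharp S (sc c x)) = sc c (K (S_sharp S x))" for c x
  proof -
    have "S_sharp S (sc c x) = (\<lambda>z. c * S_sharp S x z)"
      by (auto simp: S_sharp_def lin_scale[OF L2])
    then show ?thesis using Kd dS by (simp add: dual_linear_def)
  qed
  have Blin: "Vector_Spaces.linear sc sc (K \<circ> S_sharp S)"
    unfolding Vector_Spaces.linear_iff using vs Badd Bsc by simp
  have co: "(\<lambda>z. coad br (K (S_sharp S x)) (S_sharp S y) z - coad br (K (S_sharp S y)) (S_sharp S x) z)
     = S_sharp S (br (K (S_sharp S x)) y + br x (K (S_sharp S y)))" for x y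
  proof
    fix z
    let ?a = "K (S_sharp S x)" and ?b = "K (S_sharp S y)"
    have 1: "- S y (br ?a z) = S (br ?a y) z" using inv[of ?a y z] by (metis add.commute minus_unique)
    have 2: "S x (br ?b z) = - S (br ?b x) z"
      using inv[of ?b z x] sym[of x "br ?b z"] sym[of z "br ?b x"] by (metis add.commute minus_unique)
    have 3: "S (br ?b x) z = - S (br x ?b) z" using anti[of ?b x] Sneg by simp
    show "coad br ?a (S_sharp S y) z - coad br ?b (S_sharp S x) z
      = S_sharp S (br ?a y + br x ?b) z"
      using 1 2 3 by (simp add: coad_def S_sharp_def lin_add[OF L2])
  qed
  have ed: "dual_map E (S_sharp S x) = S_sharp S (E x)" for x
    by (auto simp: dual_map_def S_sharp_def Es)
  show ?thesis
  proof
    assume R: "ENE_relative_RB_coad sc br E K"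
    show "RB_weight0_ENL sc br E (K \<circ> S_sharp S)"
      unfolding RB_weight0_ENL_def
    proof (intro conjI allI Blin)
      fix x y
      show "br ((K \<circ> S_sharp S) x) ((K \<circ> S_sharp S) y) =
        (K \<circ> S_sharp S) (br ((K \<circ> S_sharp S) x) y + br x ((K \<circ> S_sharp S) y))"
        using R dS co by (simp add: ENE_relative_RB_coad_def)
    next
      show "E \<circ> (K \<circ> S_sharp S) = K \<circ> S_sharp S \<circ> E"
        using R dS ed by (auto simp: ENE_relative_RB_coad_def)
    qed
  next
    assume R: "RB_weight0_ENL sc br E (K \<circ> S_sharp S)"
    show "ENE_relative_RB_coad sc br E K"
      unfolding ENE_relative_RB_coad_def
    proof (intro conjI allI impI Kd)
      fix \<xi> \<eta> assume "is_dual sc \<xi>" "is_dual sc \<eta>"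
      then obtain x y where "\<xi> = S_sharp S x" "\<eta> = S_sharp S y" using srj by blast
      then show "br (K \<xi>) (K \<eta>) = K (\<lambda>y. coad br (K \<xi>) \<eta> y - coad br (K \<eta>) \<xi> y)"
        using R co[of x y] by (simp add: RB_weight0_ENL_def)
    next
      fix \<xi> assume "is_dual sc \<xi>"
      then obtain x where "\<xi> = S_sharp S x" using srj by blast
      then show "E (K \<xi>) = K (dual_map E \<xi>)"
      proof -
        have "E \<circ> (K \<circ> S_sharp S) = K \<circ> S_sharp S \<circ> E"
          using R unfolding RB_weight0_ENL_def by blast
        then have "(E \<circ> (K \<circ> S_sharp S)) x = (K \<circ> S_sharp S \<circ> E) x" by (rule arg_cong)
        then have "E (K (S_sharp S x)) = K (S_sharp S (E x))" by (simp only: comp_apply)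
        then show ?thesis using \<open>\<xi> = S_sharp S x\<close> ed[of x] by (simp only:)
      qed
    qed
  qed
qed

end
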